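(* Let $V$ be a real Banach space, let $\Gamma$ be a subgroup of the bijective bounded linear operators on $V$, and let $f \in C^1([0,\infty) \times V, V)$ satisfy $f(t,Tu) = T f(t,u)$ for all $T \in \Gamma$, $u \in V$, $t \ge 0$. Let $V_\Gamma = \{u \in V : Tu = u \ \forall T \in \Gamma\}$ and assume $\dim V_\Gamma < \infty$. Then there exists a bounded linear projection $P$ with $\operatorname{im}(P) = V_\Gamma$; moreover $Qf(t,Pv) = 0$ for all $t, v$, where $Q = I - P$. If, in addition, there is $\lambda < 0$ such that $$\frac{(Qw,\, Q\, D_u f(t,u)\, w)_+}{\|Qw\|^2} \le \lambda \quad \text{for all } t \ge 0,\ u \in V,\ w \in V \text{ with } Qw \ne 0,$$ then every solution $u$ of $\dot u = f(t,u)$ converges exponentially to $V_\Gamma$: there is a constant $K$ (depending on the solution) with $d(u(t), V_\Gamma) \le K e^{\lambda t}$ for all $t \ge 0$.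
   Context: For a real Banach space $V$, the right semi-inner product is $(a,b)_+ := \|a\| \lim_{h \to 0^+} \frac{\|a + hb\| - \|a\|}{h}$. $d(u, S) = \inf_{s \in S}\|u - s\|$, and $D_u$ is the Fréchet derivative in $u$. Solutions are continuously differentiable curves $[0,\infty) \to V$ satisfying the equation; solutions of the initial value problem are assumed to exist and to be unique. *)

theory Defs
  imports "HOL-Analysis.Analysis"
begin

definition semi_inner_plus :: "'a::real_normed_vector \<Rightarrow> 'a \<Rightarrow> real" where
  "semi_inner_plus a b = norm a * Lim (at_right 0) (\<lambda>h. (norm (a + h *\<^sub>R b) - norm a) / h)"

definition fixed_space :: "('a \<Rightarrow> 'a) set \<Rightarrow> 'a set" where
  "fixed_space G = {u. \<forall>T\<in>G. T u = u}"

definition operator_subgroup :: "('a::real_normed_vector \<Rightarrow> 'a) set \<Rightarrow> bool" where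
  "operator_subgroup G \<longleftrightarrow>
     (\<forall>T\<in>G. bounded_linear T \<and> bij T) \<and> id \<in> G \<and>
     (\<forall>S\<in>G. \<forall>T\<in>G. S \<circ> T \<in> G) \<and> (\<forall>T\<in>G. inv T \<in> G)"

definition is_solution :: "(real \<Rightarrow> 'a::real_normed_vector \<Rightarrow> 'a) \<Rightarrow> (real \<Rightarrow> 'a) \<Rightarrow> bool" where
  "is_solution f u \<longleftrightarrow>
     (\<exists>u'. continuous_on {0..} u' \<and>
        (\<forall>t\<ge>0. (u has_vector_derivative u' t) (at t within {0..}) \<and> u' t = f t (u t)))"

end

theory Submission
  imports Defs "HOL-Analysis.Analysis"
begin

definition sublin :: "('a::real_vector \<Rightarrow> real) \<Rightarrow> bool" where
  "sublin p \<longleftrightarrow> (\<forall>x y. p (x + y) \<le> p x + p y) \<and> (\<forall>c x. c \<ge> 0 \<longrightarrow> p (c *\<^sub>R x) = c * p x)"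

definition gr_good :: "('a::real_vector \<Rightarrow> real) \<Rightarrow> ('a \<times> real) set \<Rightarrow> bool" where
  "gr_good p H \<longleftrightarrow> (\<forall>x y y'. (x,y)\<in>H \<longrightarrow> (x,y')\<in>H \<longrightarrow> y = y') \<and>
     (\<forall>x y x' y'. (x,y)\<in>H \<longrightarrow> (x',y')\<in>H \<longrightarrow> (x+x', y+y')\<in>H) \<and>
     (\<forall>x y c. (x,y)\<in>H \<longrightarrow> (c *\<^sub>R x, c*y)\<in>H) \<and>
     (\<forall>x y. (x,y)\<in>H \<longrightarrow> y \<le> p x)"

lemma chain_union_good:
  assumes C: "C \<in> chains {H. gr_good p H \<and> H0 \<subseteq> H}" and ne: "C \<noteq> {}"
  shows "gr_good p (\<Union>C) \<and> H0 \<subseteq> \<Union>C"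
proof -
  have sub: "\<And>H. H \<in> C \<Longrightarrow> gr_good p H \<and> H0 \<subseteq> H" using C by (auto simp: chains_def)
  have two: "\<And>a b. a \<in> \<Union>C \<Longrightarrow> b \<in> \<Union>C \<Longrightarrow> \<exists>H\<in>C. a \<in> H \<and> b \<in> H"
    using C unfolding chains_def chain_subset_def by blast
  show ?thesis
    unfolding gr_good_def
  proof (intro conjI allI impI)
    fix x y y' assume "(x,y) \<in> \<Union>C" "(x,y') \<in> \<Union>C"
    then obtain H where "H\<in>C" "(x,y)\<in>H" "(x,y')\<in>H" using two by blast
    then show "y = y'" using sub[of H] unfolding gr_good_def by blast
  next
    fix x y x' y' assume "(x,y) \<in> \<Union>C" "(x',y') \<in> \<Union>C"
    then obtain H where "H\<in>C" "(x,y)\<in>H" "(x',y')\<in>H" using two by blast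
    then show "(x+x', y+y') \<in> \<Union>C" using sub[of H] unfolding gr_good_def by blast
  next
    fix x y c assume "(x,y) \<in> \<Union>C"
    then obtain H where "H\<in>C" "(x,y)\<in>H" by blast
    then show "(c *\<^sub>R x, c*y) \<in> \<Union>C" using sub[of H] unfolding gr_good_def by blast
  next
    fix x y assume "(x,y) \<in> \<Union>C"
    then obtain H where "H\<in>C" "(x,y)\<in>H" by blast
    then show "y \<le> p x" using sub[of H] unfolding gr_good_def by blast
  next
    obtain H where "H \<in> C" using ne by blast
    then show "H0 \<subseteq> \<Union>C" using sub by blast
  qed
qed

lemma extend_step:
  assumes p: "sublin p" and g: "gr_good p H" and z: "(0,0) \<in> H" and x0: "x0 \<notin> Domain H"
  shows "\<exists>H'. gr_good p H' \<and> H \<subseteq> H' \<and> H' \<noteq> H"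
proof -
  have fnc: "\<And>x y y'. (x,y)\<in>H \<Longrightarrow> (x,y')\<in>H \<Longrightarrow> y = y'"
   and add: "\<And>x y x' y'. (x,y)\<in>H \<Longrightarrow> (x',y')\<in>H \<Longrightarrow> (x+x', y+y')\<in>H"
   and sc: "\<And>x y c. (x,y)\<in>H \<Longrightarrow> (c *\<^sub>R x, c*y)\<in>H"
   and bd: "\<And>x y. (x,y)\<in>H \<Longrightarrow> y \<le> p x" using g unfolding gr_good_def by blast+
  have psub: "\<And>x y. p (x + y) \<le> p x + p y" and phom: "\<And>c x. c \<ge> 0 \<Longrightarrow> p (c *\<^sub>R x) = c * p x"
    using p unfolding sublin_def by blast+
  have key: "y1 - p (m1 - x0) \<le> p (m2 + x0) - y2" if "(m1,y1)\<in>H" "(m2,y2)\<in>H" for m1 y1 m2 y2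
  proof -
    have "y1 + y2 \<le> p (m1 + m2)" using bd[OF add[OF that]] .
    also have "p (m1 + m2) = p ((m1 - x0) + (m2 + x0))" by (simp add: algebra_simps)
    also have "\<dots> \<le> p (m1 - x0) + p (m2 + x0)" by (rule psub)
    finally show ?thesis by simp
  qed
  define Ls where "Ls = {y - p (m - x0) | m y. (m,y)\<in>H}"
  define c where "c = Sup Ls"
  have Lne: "Ls \<noteq> {}" using z unfolding Ls_def by blast
  have Lbdd: "bdd_above Ls" unfolding Ls_def bdd_above_def using key[OF _ z] by auto
  have c_ge: "y - p (m - x0) \<le> c" if "(m,y)\<in>H" for m y
    unfolding c_def using that by (intro cSup_upper[OF _ Lbdd]) (auto simp: Ls_def)
  have c_le: "c \<le> p (m + x0) - y" if "(m,y)\<in>H" for m y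
    unfolding c_def using Lne key[OF _ that] by (intro cSup_least) (auto simp: Ls_def)
  define H' where "H' = {(m + t *\<^sub>R x0, y + t*c) | m y t. (m,y)\<in>H}"
  have "gr_good p H'"
    unfolding gr_good_def
  proof (intro conjI allI impI)
    fix x y y' assume a: "(x,y) \<in> H'" "(x,y') \<in> H'"
    then obtain m1 v1 t1 m2 v2 t2 where h1: "(m1,v1)\<in>H" "x = m1 + t1 *\<^sub>R x0" "y = v1 + t1*c"
      and h2: "(m2,v2)\<in>H" "x = m2 + t2 *\<^sub>R x0" "y' = v2 + t2*c"
      unfolding H'_def by blast
    have "t1 = t2"
    proof (rule ccontr)
      assume ne: "t1 \<noteq> t2"
      have "(m1 + (-1) *\<^sub>R m2, v1 + (-1) * v2) \<in> H" using add[OF h1(1) sc[OF h2(1)]] .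
      from sc[OF this, of "1/(t2 - t1)"]
      have "((1/(t2-t1)) *\<^sub>R (m1 - m2), (1/(t2-t1)) * (v1 - v2)) \<in> H" by simp
      moreover have "(1/(t2-t1)) *\<^sub>R (m1 - m2) = x0"
      proof -
        have "m1 - m2 = (t2 - t1) *\<^sub>R x0" using h1(2) h2(2) by (simp add: algebra_simps)
        then show ?thesis using ne by simp
      qed
      ultimately have "x0 \<in> Domain H" by force
      then show False using x0 by blast
    qed
    then have "m1 = m2" using h1(2) h2(2) by simp
    then have "v1 = v2" using fnc h1(1) h2(1) by blast
    then show "y = y'" using h1 h2 \<open>t1 = t2\<close> by simp
  next
    fix x y x' y' assume "(x,y) \<in> H'" "(x',y') \<in> H'"
    then obtain m1 v1 t1 m2 v2 t2 where h1: "(m1,v1)\<in>H" "x = m1 + t1 *\<^sub>R x0" "y = v1 + t1*c"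
      and h2: "(m2,v2)\<in>H" "x' = m2 + t2 *\<^sub>R x0" "y' = v2 + t2*c"
      unfolding H'_def by blast
    have "x + x' = (m1 + m2) + (t1 + t2) *\<^sub>R x0" "y + y' = (v1 + v2) + (t1+t2)*c"
      using h1 h2 by (simp_all add: algebra_simps)
    then show "(x+x', y+y') \<in> H'" unfolding H'_def using add[OF h1(1) h2(1)] by blast
  next
    fix x y a assume "(x,y) \<in> H'"
    then obtain m1 v1 t1 where h1: "(m1,v1)\<in>H" "x = m1 + t1 *\<^sub>R x0" "y = v1 + t1*c"
      unfolding H'_def by blast
    have "a *\<^sub>R x = a *\<^sub>R m1 + (a*t1) *\<^sub>R x0" "a * y = a * v1 + (a*t1)*c"
      using h1 by (simp_all add: algebra_simps)
    then show "(a *\<^sub>R x, a*y) \<in> H'" unfolding H'_def using sc[OF h1(1)] by blast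
  next
    fix x y assume "(x,y) \<in> H'"
    then obtain m v t where h: "(m,v)\<in>H" "x = m + t *\<^sub>R x0" "y = v + t*c"
      unfolding H'_def by blast
    consider "t > 0" | "t < 0" | "t = 0" by linarith
    then show "y \<le> p x"
    proof cases
      case 1
      have "c \<le> p ((1/t) *\<^sub>R m + x0) - (1/t) * v" using c_le[OF sc[OF h(1), of "1/t"]] .
      then have "t * c \<le> t * p ((1/t) *\<^sub>R m + x0) - v" using 1
        by (simp add: field_simps)
      also have "t * p ((1/t) *\<^sub>R m + x0) = p (t *\<^sub>R ((1/t) *\<^sub>R m + x0))"
        using phom[of t] 1 by simp
      also have "t *\<^sub>R ((1/t) *\<^sub>R m + x0) = x" using 1 h(2) by (simp add: algebra_simps)
      finally show ?thesis using h(3) by simp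
    next
      case 2
      define s where "s = - t"
      have s: "s > 0" using 2 s_def by simp
      have "(1/s) * v - p ((1/s) *\<^sub>R m - x0) \<le> c" using c_ge[OF sc[OF h(1), of "1/s"]] .
      then have "v - s * p ((1/s) *\<^sub>R m - x0) \<le> s * c" using s
        by (simp add: field_simps)
      also have "s * p ((1/s) *\<^sub>R m - x0) = p (s *\<^sub>R ((1/s) *\<^sub>R m - x0))"
        using phom[of s] s by simp
      also have "s *\<^sub>R ((1/s) *\<^sub>R m - x0) = x" using s h(2) s_def by (simp add: algebra_simps)
      finally show ?thesis using h(3) s_def by simp
    next
      case 3 then show ?thesis using h bd by simp
    qed
  qed
  moreover have "H \<subseteq> H'"
  proof
    fix a assume "a \<in> H"
    then obtain m y where "a = (m,y)" "(m,y)\<in>H" by (cases a) auto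
    then show "a \<in> H'" unfolding H'_def by force
  qed
  moreover have "(x0, c) \<in> H'"
  proof -
    have "(x0, c) = (0 + 1 *\<^sub>R x0, 0 + 1*c)" by simp
    then show ?thesis unfolding H'_def using z by blast
  qed
  then have "H' \<noteq> H" using x0 by blast
  ultimately show ?thesis by blast
qed

lemma hahn_banach_graph:
  fixes p :: "'a::real_vector \<Rightarrow> real"
  assumes p: "sublin p" and g0: "gr_good p H0" and ne: "H0 \<noteq> {}"
  shows "\<exists>F. (\<forall>x y. F (x + y) = F x + F y) \<and> (\<forall>c x. F (c *\<^sub>R x) = c * F x) \<and>
            (\<forall>x. F x \<le> p x) \<and> (\<forall>x y. (x,y)\<in>H0 \<longrightarrow> F x = y)"
proof -
  let ?A = "{H. gr_good p H \<and> H0 \<subseteq> H}"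
  have "\<forall>C\<in>chains ?A. \<exists>U\<in>?A. \<forall>X\<in>C. X \<subseteq> U"
  proof
    fix C assume C: "C \<in> chains ?A"
    show "\<exists>U\<in>?A. \<forall>X\<in>C. X \<subseteq> U"
    proof (cases "C = {}")
      case True then show ?thesis using g0 by blast
    next
      case False then show ?thesis using chain_union_good[OF C False] by blast
    qed
  qed
  from Zorn_Lemma2[OF this] obtain M where M: "M \<in> ?A" and max: "\<forall>X\<in>?A. M \<subseteq> X \<longrightarrow> X = M" by blast
  have gM: "gr_good p M" using M by blast
  have fnc: "\<And>x y y'. (x,y)\<in>M \<Longrightarrow> (x,y')\<in>M \<Longrightarrow> y = y'"
   and add: "\<And>x y x' y'. (x,y)\<in>M \<Longrightarrow> (x',y')\<in>M \<Longrightarrow> (x+x', y+y')\<in>M"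
   and sc: "\<And>x y c. (x,y)\<in>M \<Longrightarrow> (c *\<^sub>R x, c*y)\<in>M"
   and bd: "\<And>x y. (x,y)\<in>M \<Longrightarrow> y \<le> p x" using gM unfolding gr_good_def by blast+
  obtain a b where "(a,b) \<in> H0" using ne by auto
  then have "(a,b) \<in> M" using M by blast
  from sc[OF this, of 0] have z: "(0,0) \<in> M" by simp
  have dom: "Domain M = UNIV"
  proof (rule ccontr)
    assume "Domain M \<noteq> UNIV"
    then obtain x0 where "x0 \<notin> Domain M" by blast
    from extend_step[OF p gM z this] obtain H' where "gr_good p H'" "M \<subseteq> H'" "H' \<noteq> M" by blast
    then show False using max M by blast
  qed
  define F where "F x = (THE y. (x,y)\<in>M)" for x
  have FM: "(x, F x) \<in> M" for x
  proof -
    obtain y where "(x,y)\<in>M" using dom by blast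
    then show ?thesis unfolding F_def by (rule theI) (use fnc \<open>(x,y)\<in>M\<close> in blast)
  qed
  have Fu: "(x,y) \<in> M \<Longrightarrow> F x = y" for x y using fnc FM by blast
  show ?thesis
  proof (intro exI[of _ F] conjI allI impI)
    fix x y show "F (x + y) = F x + F y" using Fu[OF add[OF FM FM]] .
  next
    fix c x show "F (c *\<^sub>R x) = c * F x" using Fu[OF sc[OF FM]] .
  next
    fix x show "F x \<le> p x" using bd[OF FM] .
  next
    fix x y assume "(x,y)\<in>H0" then show "F x = y" using Fu M by blast
  qed
qed

lemma sep_functional:
  fixes M :: "'a::real_normed_vector set"
  assumes M: "subspace M" and d: "d > 0" and far: "\<And>m. m \<in> M \<Longrightarrow> d \<le> norm (b - m)"
  shows "\<exists>\<phi>::'a \<Rightarrow> real. bounded_linear \<phi> \<and> (\<forall>m\<in>M. \<phi> m = 0) \<and> \<phi> b = 1"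
proof -
  define p where "p x = norm x / d" for x :: 'a
  have p: "sublin p" unfolding sublin_def p_def
    using d by (auto simp: add_divide_distrib[symmetric] divide_right_mono norm_triangle_ineq)
  define H0 where "H0 = {(m + t *\<^sub>R b, t) | m t. m \<in> M}"
  have bnotM: "b \<notin> M" using far[of b] d by auto
  have g0: "gr_good p H0"
    unfolding gr_good_def
  proof (intro conjI allI impI)
    fix x y y' assume "(x,y) \<in> H0" "(x,y') \<in> H0"
    then obtain m1 m2 where h: "m1 \<in> M" "m2 \<in> M" "x = m1 + y *\<^sub>R b" "x = m2 + y' *\<^sub>R b"
      unfolding H0_def by blast
    show "y = y'"
    proof (rule ccontr)
      assume ne: "y \<noteq> y'"
      have "m1 - m2 = (y' - y) *\<^sub>R b" using h by (simp add: algebra_simps)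
      then have "b = (1/(y'-y)) *\<^sub>R (m1 - m2)" using ne by simp
      also have "\<dots> \<in> M" using h M by (simp add: subspace_scale subspace_diff)
      finally show False using bnotM by blast
    qed
  next
    fix x y x' y' assume "(x,y) \<in> H0" "(x',y') \<in> H0"
    then obtain m1 m2 where h: "m1 \<in> M" "m2 \<in> M" "x = m1 + y *\<^sub>R b" "x' = m2 + y' *\<^sub>R b"
      unfolding H0_def by blast
    have "x + x' = (m1 + m2) + (y + y') *\<^sub>R b" using h by (simp add: algebra_simps)
    moreover have "m1 + m2 \<in> M" using h M by (simp add: subspace_add)
    ultimately show "(x + x', y + y') \<in> H0" unfolding H0_def by blast
  next
    fix x y c assume "(x,y) \<in> H0"
    then obtain m1 where h: "m1 \<in> M" "x = m1 + y *\<^sub>R b"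
      unfolding H0_def by blast
    have "c *\<^sub>R x = c *\<^sub>R m1 + (c * y) *\<^sub>R b" using h by (simp add: algebra_simps)
    moreover have "c *\<^sub>R m1 \<in> M" using h M by (simp add: subspace_scale)
    ultimately show "(c *\<^sub>R x, c * y) \<in> H0" unfolding H0_def by blast
  next
    fix x y assume "(x,y) \<in> H0"
    then obtain m where h: "m \<in> M" "x = m + y *\<^sub>R b"
      unfolding H0_def by blast
    show "y \<le> p x"
    proof (cases "y \<le> 0")
      case True
      have "0 \<le> norm x / d" using d by simp
      then show ?thesis using True unfolding p_def by linarith
    next
      case False
      then have y: "y > 0" by simp
      have "- ((1/y) *\<^sub>R m) \<in> M" using h M by (simp add: subspace_scale subspace_neg)
      from far[OF this] have "d \<le> norm (b + (1/y) *\<^sub>R m)" by simp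
      also have "b + (1/y) *\<^sub>R m = (1/y) *\<^sub>R x" using h y by (simp add: algebra_simps)
      also have "norm \<dots> = norm x / y" using y by simp
      finally have "d * y \<le> norm x" using y by (simp add: field_simps)
      then show ?thesis unfolding p_def using d by (simp add: field_simps)
    qed
  qed
  have "(0 + 1 *\<^sub>R b, 1) \<in> H0" unfolding H0_def using M subspace_0 by blast
  then have ne: "H0 \<noteq> {}" by blast
  from hahn_banach_graph[OF p g0 ne] obtain F where
    Fa: "\<And>x y. F (x + y) = F x + F y" and Fs: "\<And>c x. F (c *\<^sub>R x) = c * F x"
    and Fp: "\<And>x. F x \<le> p x" and FH: "\<And>x y. (x,y)\<in>H0 \<Longrightarrow> F x = y" by blast
  have "bounded_linear F"
  proof (rule bounded_linear_intro[where K="1/d"])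
    fix x
    have "F x \<le> norm x / d" using Fp[of x] unfolding p_def .
    moreover have "- F x \<le> norm x / d" using Fp[of "-x"] Fs[of "-1" x] unfolding p_def by simp
    ultimately show "norm (F x) \<le> norm x * (1/d)" by simp
  qed (use Fa Fs in auto)
  moreover have "\<forall>m\<in>M. F m = 0"
  proof
    fix m assume "m \<in> M"
    then have "(m + 0 *\<^sub>R b, 0) \<in> H0" unfolding H0_def by blast
    then show "F m = 0" using FH by simp
  qed
  moreover have "F b = 1" using FH[OF \<open>(0 + 1 *\<^sub>R b, 1) \<in> H0\<close>] by simp
  ultimately show ?thesis by blast
qed

lemma proj_exists:
  fixes B :: "'a::banach set"
  assumes "finite B"
  shows "\<exists>P. bounded_linear P \<and> (\<forall>v. P v \<in> span B) \<and> (\<forall>v\<in>span B. P v = v)"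
  using assms
proof (induction B rule: finite_induct)
  case empty
  show ?case by (intro exI[of _ "\<lambda>_. 0"]) auto
next
  case (insert b B)
  then obtain P where P: "bounded_linear P" "\<And>v. P v \<in> span B" "\<And>v. v \<in> span B \<Longrightarrow> P v = v" by blast
  show ?case
  proof (cases "b \<in> span B")
    case True
    then have "span (insert b B) = span B" by (rule span_redundant)
    then show ?thesis using P by auto
  next
    case False
    have Meq: "span B = {v. P v = v}"
    proof (intro set_eqI iffI)
      fix v assume "v \<in> span B" then show "v \<in> {v. P v = v}" using P(3) by simp
    next
      fix v assume "v \<in> {v. P v = v}" then show "v \<in> span B" using P(2)[of v] by simp
    qed
    have "closed {v. P v = v}"
      using P(1) by (intro closed_Collect_eq continuous_intros) (auto intro: linear_continuous_on)
    then have cl: "closed (span B)" using Meq by simp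
    define d where "d = infdist b (span B)"
    have d: "d > 0" unfolding d_def using cl False span_zero
      by (intro infdist_pos_not_in_closed) auto
    have far: "d \<le> norm (b - m)" if "m \<in> span B" for m
      unfolding d_def using infdist_le[OF that, of b] by (simp add: dist_norm)
    have "\<exists>\<phi>::'a \<Rightarrow> real. bounded_linear \<phi> \<and> (\<forall>m\<in>span B. \<phi> m = 0) \<and> \<phi> b = 1"
      by (rule sep_functional[of "span B" d b]) (use subspace_span d far in auto)
    then obtain \<phi> :: "'a \<Rightarrow> real" where phi: "bounded_linear \<phi>" "\<And>m. m \<in> span B \<Longrightarrow> \<phi> m = 0" "\<phi> b = 1"
      by blast
    define P' where "P' x = P (x - \<phi> x *\<^sub>R b) + \<phi> x *\<^sub>R b" for x
    have bl: "bounded_linear P'"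
    proof -
      have "bounded_linear (\<lambda>x. \<phi> x *\<^sub>R b)"
        using phi(1) by (rule bounded_linear_compose[OF bounded_linear_scaleR_left])
      moreover have "bounded_linear (\<lambda>x. x - \<phi> x *\<^sub>R b)"
        by (intro bounded_linear_sub bounded_linear_ident calculation)
      ultimately show ?thesis unfolding P'_def
        by (intro bounded_linear_add bounded_linear_compose[OF P(1)])
    qed
    have rng: "P' v \<in> span (insert b B)" for v
      unfolding P'_def
      by (intro span_add span_scale) (auto intro: span_base span_mono[of B "insert b B", THEN subsetD] P(2))
    have fix': "P' v = v" if vin: "v \<in> span (insert b B)" for v
    proof -
      obtain k where k: "v - k *\<^sub>R b \<in> span B" using vin span_breakdown_eq by blast
      have "\<phi> v = \<phi> (v - k *\<^sub>R b) + k * \<phi> b"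
        using phi(1) by (simp add: linear_simps bounded_linear.linear)
      then have "\<phi> v = k" using phi k by simp
      then show ?thesis unfolding P'_def using P(3)[OF k] by simp
    qed
    show ?thesis using bl rng fix' by blast
  qed
qed


definition dq :: "'a::real_normed_vector \<Rightarrow> 'a \<Rightarrow> real \<Rightarrow> real" where
  "dq x y h = (norm (x + h *\<^sub>R y) - norm x) / h"

definition Ls :: "'a::real_normed_vector \<Rightarrow> 'a \<Rightarrow> real" where
  "Ls x y = Inf (dq x y ` {0<..})"

lemma dq_mono:
  assumes h1: "0 < h1" and h12: "h1 \<le> h2"
  shows "dq x y h1 \<le> dq x y h2"
proof -
  have h2: "0 < h2" using h1 h12 by simp
  define a where "a = h1 / h2"
  have a: "0 < a" "a \<le> 1" using h1 h2 h12 unfolding a_def by auto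
  have "x + h1 *\<^sub>R y = (1 - a) *\<^sub>R x + a *\<^sub>R (x + h2 *\<^sub>R y)"
    using h2 unfolding a_def by (simp add: algebra_simps)
  moreover have "norm ((1 - a) *\<^sub>R x + a *\<^sub>R (x + h2 *\<^sub>R y)) \<le> norm ((1 - a) *\<^sub>R x) + norm (a *\<^sub>R (x + h2 *\<^sub>R y))"
    by (rule norm_triangle_ineq)
  moreover have "norm ((1 - a) *\<^sub>R x) + norm (a *\<^sub>R (x + h2 *\<^sub>R y)) = (1 - a) * norm x + a * norm (x + h2 *\<^sub>R y)"
    using a by simp
  ultimately have "norm (x + h1 *\<^sub>R y) \<le> (1 - a) * norm x + a * norm (x + h2 *\<^sub>R y)"
    by simp
  then have "norm (x + h1 *\<^sub>R y) - norm x \<le> a * (norm (x + h2 *\<^sub>R y) - norm x)"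
    by (simp add: algebra_simps)
  then have "(norm (x + h1 *\<^sub>R y) - norm x) / h1 \<le> (norm (x + h2 *\<^sub>R y) - norm x) / h2"
    using h1 h2 unfolding a_def by (simp add: field_simps)
  then show ?thesis unfolding dq_def .
qed

lemma dq_lower: "0 < h \<Longrightarrow> - norm y \<le> dq x y h"
proof -
  assume h: "0 < h"
  have "norm x \<le> norm (x + h *\<^sub>R y) + norm (h *\<^sub>R y)"
    using norm_triangle_ineq4[of "x + h *\<^sub>R y" "h *\<^sub>R y"] by simp
  then have "- (h * norm y) \<le> norm (x + h *\<^sub>R y) - norm x" using h by simp
  then show ?thesis unfolding dq_def using h by (simp add: field_simps)
qed

lemma dq_bdd: "bdd_below (dq x y ` {0<..})"
  using dq_lower by (auto simp: bdd_below_def)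

lemma Ls_le: "0 < h \<Longrightarrow> Ls x y \<le> dq x y h"
  unfolding Ls_def by (rule cInf_lower[OF _ dq_bdd]) simp

lemma Ls_greatest: "(\<And>h. 0 < h \<Longrightarrow> a \<le> dq x y h) \<Longrightarrow> a \<le> Ls x y"
  unfolding Ls_def by (rule cInf_greatest) auto

lemma Ls_approx:
  assumes e: "e > 0"
  shows "\<exists>h0>0. \<forall>h. 0 < h \<longrightarrow> h \<le> h0 \<longrightarrow> dq x y h < Ls x y + e"
proof -
  have "Inf (dq x y ` {0<..}) < Ls x y + e" using e unfolding Ls_def by simp
  then obtain h0 where "h0 > 0" "dq x y h0 < Ls x y + e"
    by (subst (asm) cInf_less_iff) (auto intro: dq_bdd)
  then show ?thesis using dq_mono[of _ h0 x y] by (intro exI[of _ h0]) force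
qed

lemma sip_eq: "semi_inner_plus x y = norm x * Ls x y"
proof -
  have "(dq x y \<longlongrightarrow> Inf (dq x y ` ({0<..} \<inter> UNIV))) (at 0 within ({0<..} \<inter> UNIV))"
    by (rule Lim_right_bound[where K="- norm y"]) (auto intro: dq_mono dq_lower)
  then have "(dq x y \<longlongrightarrow> Ls x y) (at_right 0)" unfolding Ls_def by simp
  then have "Lim (at_right 0) (dq x y) = Ls x y" by (intro tendsto_Lim) auto
  moreover have "(\<lambda>h. (norm (x + h *\<^sub>R y) - norm x) / h) = dq x y"
    unfolding dq_def by auto
  ultimately show ?thesis unfolding semi_inner_plus_def by simp
qed

lemma aux_half:
  fixes N N1 N2 n h :: real
  assumes "0 < h" "N \<le> (1/2) * N1 + (1/2) * N2"
  shows "(N - n) / h \<le> (N1 - n) / (2*h) + (N2 - n) / (2*h)"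
proof -
  have "(N - n) / h \<le> ((1/2) * N1 + (1/2) * N2 - n) / h"
    using assms by (intro divide_right_mono) auto
  also have "\<dots> = (N1 - n) / (2*h) + (N2 - n) / (2*h)"
    using assms(1) by (simp add: field_simps)
  finally show ?thesis .
qed

lemma Ls_sub: "Ls x (y1 + y2) \<le> Ls x y1 + Ls x y2"
proof (rule field_le_epsilon)
  fix e :: real assume e: "e > 0"
  obtain h1 where h1: "h1 > 0" "\<And>h. 0 < h \<Longrightarrow> h \<le> h1 \<Longrightarrow> dq x y1 h < Ls x y1 + e/2"
    using Ls_approx[of "e/2" x y1] e by auto
  obtain h2 where h2: "h2 > 0" "\<And>h. 0 < h \<Longrightarrow> h \<le> h2 \<Longrightarrow> dq x y2 h < Ls x y2 + e/2"
    using Ls_approx[of "e/2" x y2] e by auto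
  define h where "h = min h1 h2 / 2"
  have h: "h > 0" "2*h \<le> h1" "2*h \<le> h2" using h1 h2 unfolding h_def by auto
  have e1: "(1/2) *\<^sub>R (x + (2*h) *\<^sub>R y1) = (1/2) *\<^sub>R x + h *\<^sub>R y1"
    by (simp add: scaleR_add_right)
  have e2: "(1/2) *\<^sub>R (x + (2*h) *\<^sub>R y2) = (1/2) *\<^sub>R x + h *\<^sub>R y2"
    by (simp add: scaleR_add_right)
  have e3: "(1/2) *\<^sub>R x + (1/2) *\<^sub>R x = x"
    by (metis field_sum_of_halves scaleR_add_left scaleR_one)
  have e4: "((1/2) *\<^sub>R x + h *\<^sub>R y1) + ((1/2) *\<^sub>R x + h *\<^sub>R y2) = ((1/2) *\<^sub>R x + (1/2) *\<^sub>R x) + h *\<^sub>R (y1 + y2)"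
    by (simp add: algebra_simps)
  have eq: "x + h *\<^sub>R (y1 + y2) = (1/2) *\<^sub>R (x + (2*h) *\<^sub>R y1) + (1/2) *\<^sub>R (x + (2*h) *\<^sub>R y2)"
    unfolding e1 e2 e4 e3 ..
  have "norm (x + h *\<^sub>R (y1 + y2)) \<le> norm ((1/2) *\<^sub>R (x + (2*h) *\<^sub>R y1)) + norm ((1/2) *\<^sub>R (x + (2*h) *\<^sub>R y2))"
    unfolding eq by (rule norm_triangle_ineq)
  also have "norm ((1/2) *\<^sub>R (x + (2*h) *\<^sub>R y1)) = (1/2) * norm (x + (2*h) *\<^sub>R y1)" by simp
  also have "norm ((1/2) *\<^sub>R (x + (2*h) *\<^sub>R y2)) = (1/2) * norm (x + (2*h) *\<^sub>R y2)" by simp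
  finally have "norm (x + h *\<^sub>R (y1 + y2)) \<le> (1/2) * norm (x + (2*h) *\<^sub>R y1) + (1/2) * norm (x + (2*h) *\<^sub>R y2)" .
  then have "dq x (y1 + y2) h \<le> dq x y1 (2*h) + dq x y2 (2*h)"
    unfolding dq_def by (rule aux_half[OF h(1)])
  also have "\<dots> < Ls x y1 + Ls x y2 + e" using h1(2)[of "2*h"] h2(2)[of "2*h"] h by simp
  finally show "Ls x (y1 + y2) \<le> Ls x y1 + Ls x y2 + e" using Ls_le[OF h(1), of x "y1 + y2"] by simp
qed

lemma Ls_scale:
  assumes t: "0 < t" shows "Ls x (t *\<^sub>R y) \<le> t * Ls x y"
proof -
  have "Ls x (t *\<^sub>R y) / t \<le> Ls x y"
  proof (rule Ls_greatest)
    fix h :: real assume h: "0 < h"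
    have "Ls x (t *\<^sub>R y) \<le> dq x (t *\<^sub>R y) (h/t)" using h t by (intro Ls_le) simp
    also have "dq x (t *\<^sub>R y) (h/t) = t * dq x y h" unfolding dq_def using t h by simp
    finally show "Ls x (t *\<^sub>R y) / t \<le> dq x y h" using t by (simp add: field_simps)
  qed
  then show ?thesis using t by (simp add: field_simps)
qed

lemma Ls_lip: "Ls x y1 \<le> Ls x y2 + norm (y1 - y2)"
proof -
  have "Ls x y1 - norm (y1 - y2) \<le> Ls x y2"
  proof (rule Ls_greatest)
    fix h :: real assume h: "0 < h"
    have eq: "x + h *\<^sub>R y1 = (x + h *\<^sub>R y2) + h *\<^sub>R (y1 - y2)" by (simp add: algebra_simps)
    have tri: "norm ((x + h *\<^sub>R y2) + h *\<^sub>R (y1 - y2)) \<le> norm (x + h *\<^sub>R y2) + norm (h *\<^sub>R (y1 - y2))"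
      by (rule norm_triangle_ineq)
    have nh: "norm (h *\<^sub>R (y1 - y2)) = h * norm (y1 - y2)" using h by simp
    have ineq: "norm (x + h *\<^sub>R y1) \<le> norm (x + h *\<^sub>R y2) + h * norm (y1 - y2)"
      using tri unfolding eq[symmetric] nh .
    have "(norm (x + h *\<^sub>R y1) - norm x) / h \<le> (norm (x + h *\<^sub>R y2) - norm x) / h + norm (y1 - y2)"
      using ineq h by (simp add: field_simps)
    then have "dq x y1 h \<le> dq x y2 h + norm (y1 - y2)" unfolding dq_def .
    then show "Ls x y1 - norm (y1 - y2) \<le> dq x y2 h" using Ls_le[OF h, of x y1] by simp
  qed
  then show ?thesis by simp
qed

lemma Ls_zero: "Ls x 0 = 0"
proof -
  have "Ls x 0 \<le> dq x 0 1" by (rule Ls_le) simp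
  moreover have "0 \<le> Ls x 0" by (rule Ls_greatest) (simp add: dq_def)
  ultimately show ?thesis by (simp add: dq_def)
qed

lemma Ls_cont: "continuous_on UNIV (Ls x)"
proof (rule lipschitz_on_continuous_on)
  show "1-lipschitz_on UNIV (Ls x)"
  proof (rule lipschitz_onI)
    fix a b
    have "Ls x a \<le> Ls x b + norm (a - b)" "Ls x b \<le> Ls x a + norm (b - a)" by (rule Ls_lip)+
    then show "dist (Ls x a) (Ls x b) \<le> 1 * dist a b"
      by (simp add: dist_real_def dist_norm norm_minus_commute abs_le_iff)
  qed simp
qed

lemma dini:
  fixes \<phi> :: "real \<Rightarrow> real"
  assumes ab: "a \<le> b" and cont: "continuous_on {a..b} \<phi>"
    and D: "\<And>s e. a \<le> s \<Longrightarrow> s < b \<Longrightarrow> 0 < e \<Longrightarrow> \<exists>d>0. \<forall>h. 0 < h \<longrightarrow> h < d \<longrightarrow> \<phi> (s+h) \<le> \<phi> s + e*h"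
  shows "\<phi> b \<le> \<phi> a"
proof (cases "a = b")
  case True then show ?thesis by simp
next
  case False
  then have ab': "a < b" using ab by simp
  have main: "\<phi> b - e * (b - a) \<le> \<phi> a" if e: "e > 0" for e
  proof -
    define \<psi> where "\<psi> r = \<phi> r - e * (r - a)" for r
    define K where "K = {a..b} \<inter> \<psi> -` {..\<phi> a}"
    have cpsi: "continuous_on {a..b} \<psi>" unfolding \<psi>_def by (intro continuous_intros cont)
    have "closed K" unfolding K_def by (rule continuous_closed_preimage[OF cpsi]) auto
    moreover have "bounded K" by (rule bounded_subset[OF bounded_closed_interval[of a b]]) (auto simp: K_def)
    ultimately have "compact K" by (simp add: compact_eq_bounded_closed)
    moreover have "a \<in> K" unfolding K_def \<psi>_def using ab by simp
    ultimately obtain c where c: "c \<in> K" and cmax: "\<And>y. y \<in> K \<Longrightarrow> y \<le> c"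
      using compact_attains_sup[of K] by blast
    have "c = b"
    proof (rule ccontr)
      assume "c \<noteq> b"
      then have cb: "c < b" "a \<le> c" using c unfolding K_def by auto
      obtain d where d: "d > 0" "\<And>h. 0 < h \<Longrightarrow> h < d \<Longrightarrow> \<phi> (c+h) \<le> \<phi> c + e*h"
        using D[OF cb(2) cb(1) e] by blast
      define h where "h = min (d/2) (b - c)"
      have h: "0 < h" "h < d" "c + h \<le> b" using d cb unfolding h_def by auto
      have "\<psi> (c + h) \<le> \<psi> c" using d(2)[OF h(1) h(2)] unfolding \<psi>_def by (simp add: algebra_simps)
      also have "\<psi> c \<le> \<phi> a" using c unfolding K_def by simp
      finally have "c + h \<in> K" unfolding K_def using h cb by simp
      then show False using cmax[of "c+h"] h by simp
    qed
    then show ?thesis using c unfolding K_def \<psi>_def by simp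
  qed
  show ?thesis
  proof (rule field_le_epsilon)
    fix e :: real assume e: "e > 0"
    have "\<phi> b - (e/(b-a)) * (b - a) \<le> \<phi> a" using main[of "e/(b-a)"] e ab' by simp
    then show "\<phi> b \<le> \<phi> a + e" using ab' by simp
  qed
qed

lemma mvt_Ls:
  fixes g :: "real \<Rightarrow> 'a::real_normed_vector"
  assumes gd: "\<And>r. r \<in> {0..1} \<Longrightarrow> (g has_vector_derivative g' r) (at r within {0..1})"
    and gb: "\<And>r. r \<in> {0..1} \<Longrightarrow> Ls x (g' r) \<le> c"
  shows "Ls x (g 1 - g 0) \<le> c"
proof -
  define \<psi> where "\<psi> r = Ls x (g r - g 0) - c * r" for r
  have gc: "continuous_on {0..1} g"
    unfolding continuous_on_eq_continuous_within using gd has_vector_derivative_continuous by blast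
  have "continuous_on {0..1} (\<lambda>r. Ls x (g r - g 0))"
    by (rule continuous_on_compose2[OF Ls_cont]) (auto intro: continuous_intros gc)
  then have cont: "continuous_on {0..1} \<psi>" unfolding \<psi>_def by (intro continuous_intros)
  have "\<psi> 1 \<le> \<psi> 0"
  proof (rule dini[OF _ cont])
    fix s e :: real assume s: "0 \<le> s" "s < 1" and e: "0 < e"
    have "(g has_derivative (\<lambda>h. h *\<^sub>R g' s)) (at s within {0..1})"
      using gd[of s] s by (simp add: has_vector_derivative_def)
    then obtain d where d: "d > 0" and
      dd: "\<And>y. y \<in> {0..1} \<Longrightarrow> norm (y - s) < d \<Longrightarrow> norm (g y - g s - (y - s) *\<^sub>R g' s) \<le> e * norm (y - s)"
      using e unfolding has_derivative_within_alt by blast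
    show "\<exists>d>0. \<forall>h. 0 < h \<longrightarrow> h < d \<longrightarrow> \<psi> (s+h) \<le> \<psi> s + e*h"
    proof (intro exI[of _ "min d (1 - s)"] conjI allI impI)
      show "0 < min d (1 - s)" using d s by simp
    next
      fix h :: real assume h: "0 < h" "h < min d (1 - s)"
      have "Ls x (g (s+h) - g 0) \<le> Ls x (g s - g 0) + Ls x (g (s+h) - g s)"
        using Ls_sub[of x "g s - g 0" "g (s+h) - g s"] by simp
      also have "Ls x (g (s+h) - g s) \<le> Ls x (h *\<^sub>R g' s) + norm (g (s+h) - g s - h *\<^sub>R g' s)"
        using Ls_lip[of x "g (s+h) - g s" "h *\<^sub>R g' s"] by simp
      also have "Ls x (h *\<^sub>R g' s) \<le> h * c"
      proof -
        have "h * Ls x (g' s) \<le> h * c" using gb[of s] s h(1) by (intro mult_left_mono) auto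
        then show ?thesis using Ls_scale[OF h(1), of x "g' s"] by linarith
      qed
      also have "norm (g (s+h) - g s - h *\<^sub>R g' s) \<le> e * h"
        using dd[of "s+h"] s h by simp
      finally show "\<psi> (s+h) \<le> \<psi> s + e*h" unfolding \<psi>_def by (simp add: algebra_simps)
    qed
  qed simp
  then show ?thesis unfolding \<psi>_def by (simp add: Ls_zero)
qed


theorem mainTheorem11:
  fixes G :: "('a::banach \<Rightarrow> 'a) set"
    and f :: "real \<Rightarrow> 'a \<Rightarrow> 'a"
    and f' :: "real \<times> 'a \<Rightarrow> (real \<times> 'a) \<Rightarrow>\<^sub>L 'a"
  assumes grp: "operator_subgroup G"
    and C1_deriv: "\<And>t u. t \<ge> 0 \<Longrightarrow>
        ((\<lambda>p. f (fst p) (snd p)) has_derivative blinfun_apply (f' (t, u))) (at (t, u) within {0..} \<times> UNIV)"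
    and C1_cont: "continuous_on ({0..} \<times> UNIV) f'"
    and equivariant: "\<And>T t u. T \<in> G \<Longrightarrow> t \<ge> 0 \<Longrightarrow> f t (T u) = T (f t u)"
    and fin_dim: "\<exists>B. finite B \<and> span B = fixed_space G"
    and ivp_exists: "\<And>u0. \<exists>u. is_solution f u \<and> u 0 = u0"
    and ivp_unique: "\<And>u1 u2 t. is_solution f u1 \<Longrightarrow> is_solution f u2 \<Longrightarrow> u1 0 = u2 0 \<Longrightarrow> t \<ge> 0 \<Longrightarrow> u1 t = u2 t"
  shows "\<exists>P. bounded_linear P \<and> (\<forall>v. P (P v) = P v) \<and> range P = fixed_space G \<and>
           (\<forall>t\<ge>0. \<forall>v. f t (P v) - P (f t (P v)) = 0) \<and>
           (\<forall>lam::real. lam < 0 \<longrightarrow>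
              (\<forall>t\<ge>0. \<forall>u w. w - P w \<noteq> 0 \<longrightarrow>
                 semi_inner_plus (w - P w)
                   (blinfun_apply (f' (t, u)) (0, w) - P (blinfun_apply (f' (t, u)) (0, w)))
                   / (norm (w - P w))\<^sup>2 \<le> lam) \<longrightarrow>
              (\<forall>u. is_solution f u \<longrightarrow> (\<exists>K. \<forall>t\<ge>0. infdist (u t) (fixed_space G) \<le> K * exp (lam * t))))"
proof -
  obtain B where B: "finite B" "span B = fixed_space G" using fin_dim by blast
  obtain P where P: "bounded_linear P" "\<And>v. P v \<in> span B" "\<And>v. v \<in> span B \<Longrightarrow> P v = v"
    using proj_exists[OF B(1)] by blast
  let ?S = "fixed_space G"
  have PS: "\<And>v. P v \<in> ?S" using P(2) B(2) by simp
  have PfixS: "\<And>v. v \<in> ?S \<Longrightarrow> P v = v" using P(3) B(2) by simp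
  have PP: "\<And>v. P (P v) = P v" using PS PfixS by simp
  have rng: "range P = ?S"
  proof (intro set_eqI iffI)
    fix v assume "v \<in> range P" then show "v \<in> ?S" using PS by auto
  next
    fix v assume "v \<in> ?S" then have "v = P v" using PfixS by simp
    then show "v \<in> range P" by blast
  qed
  have fS: "f t v \<in> ?S" if t: "t \<ge> 0" and v: "v \<in> ?S" for t v
    unfolding fixed_space_def
  proof (intro CollectI ballI)
    fix T assume T: "T \<in> G"
    have "T v = v" using v T unfolding fixed_space_def by blast
    then show "T (f t v) = f t v" using equivariant[OF T t, of v] by simp
  qed
  have part4: "\<forall>t\<ge>0. \<forall>v. f t (P v) - P (f t (P v)) = 0" using fS PS PfixS by simp
  have Plin: "linear P" using P(1) bounded_linear.linear by blast
  define Q where "Q v = v - P v" for v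
  have Qbl: "bounded_linear Q" unfolding Q_def using P(1) by (intro bounded_linear_sub bounded_linear_ident)
  have Qlin: "linear Q" using Qbl bounded_linear.linear by blast
  have PQ: "P (Q v) = 0" for v unfolding Q_def using PP linear_diff[OF Plin] by simp
  have QfS: "Q (f t p) = 0" if "t \<ge> 0" "p \<in> ?S" for t p
    unfolding Q_def using PfixS fS that by simp
  have part5: "\<forall>lam::real. lam < 0 \<longrightarrow>
              (\<forall>t\<ge>0. \<forall>u w. w - P w \<noteq> 0 \<longrightarrow>
                 semi_inner_plus (w - P w)
                   (blinfun_apply (f' (t, u)) (0, w) - P (blinfun_apply (f' (t, u)) (0, w)))
                   / (norm (w - P w))\<^sup>2 \<le> lam) \<longrightarrow>
              (\<forall>u. is_solution f u \<longrightarrow> (\<exists>K. \<forall>t\<ge>0. infdist (u t) (fixed_space G) \<le> K * exp (lam * t)))"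
  proof (intro allI impI)
    fix lam :: real and u :: "real \<Rightarrow> 'a"
    assume lam: "lam < 0"
      and hyp: "\<forall>t\<ge>0. \<forall>u w. w - P w \<noteq> 0 \<longrightarrow>
                 semi_inner_plus (w - P w)
                   (blinfun_apply (f' (t, u)) (0, w) - P (blinfun_apply (f' (t, u)) (0, w)))
                   / (norm (w - P w))\<^sup>2 \<le> lam"
      and sol: "is_solution f u"
    have claimB: "Ls z (Q (f s (p + z))) \<le> lam * norm z"
      if s: "s \<ge> 0" and p: "p \<in> ?S" and Pz: "P z = 0" and z: "z \<noteq> 0" for s p z
    proof -
      define g where "g r = Q (f s (p + r *\<^sub>R z))" for r
      define g' where "g' r = Q (blinfun_apply (f' (s, p + r *\<^sub>R z)) (0, z))" for r
      have gd: "(g has_vector_derivative g' r) (at r within {0..1})" if "r \<in> {0..1}" for r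
      proof -
        have d1: "((\<lambda>r. (s, p + r *\<^sub>R z)) has_derivative (\<lambda>h. (0, h *\<^sub>R z))) (at r within {0..1})"
          by (auto intro!: derivative_eq_intros)
        have "((\<lambda>q. f (fst q) (snd q)) has_derivative blinfun_apply (f' (s, p + r *\<^sub>R z)))
                (at (s, p + r *\<^sub>R z) within (\<lambda>r. (s, p + r *\<^sub>R z)) ` {0..1})"
          by (rule has_derivative_subset[OF C1_deriv[OF s]]) (use s in auto)
        from diff_chain_within[OF d1 this]
        have "((\<lambda>r. f s (p + r *\<^sub>R z)) has_derivative (\<lambda>h. blinfun_apply (f' (s, p + r *\<^sub>R z)) (0, h *\<^sub>R z))) (at r within {0..1})"
          by (simp add: o_def)
        from bounded_linear.has_derivative[OF Qbl this]
        have "(g has_derivative (\<lambda>h. Q (blinfun_apply (f' (s, p + r *\<^sub>R z)) (0, h *\<^sub>R z)))) (at r within {0..1})"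
          unfolding g_def .
        moreover have "(\<lambda>h. Q (blinfun_apply (f' (s, p + r *\<^sub>R z)) (0, h *\<^sub>R z))) = (\<lambda>h. h *\<^sub>R g' r)"
        proof
          fix h :: real
          have eqp: "(0::real, h *\<^sub>R z) = h *\<^sub>R (0, z)" by simp
          have "blinfun_apply (f' (s, p + r *\<^sub>R z)) (0, h *\<^sub>R z) = h *\<^sub>R blinfun_apply (f' (s, p + r *\<^sub>R z)) (0, z)"
            by (simp only: eqp blinfun.scaleR_right)
          then show "Q (blinfun_apply (f' (s, p + r *\<^sub>R z)) (0, h *\<^sub>R z)) = h *\<^sub>R g' r"
            unfolding g'_def by (simp add: linear_scale[OF Qlin])
        qed
        ultimately show ?thesis unfolding has_vector_derivative_def by simp
      qed
      have gb: "Ls z (g' r) \<le> lam * norm z" for r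
      proof -
        have zz: "z - P z = z" using Pz by simp
        have "semi_inner_plus (z - P z) (blinfun_apply (f' (s, p + r *\<^sub>R z)) (0, z) - P (blinfun_apply (f' (s, p + r *\<^sub>R z)) (0, z)))
                   / (norm (z - P z))\<^sup>2 \<le> lam"
          using hyp[rule_format, OF s, of z "p + r *\<^sub>R z"] zz z by simp
        then have "semi_inner_plus z (g' r) / (norm z)\<^sup>2 \<le> lam"
          unfolding g'_def Q_def zz .
        then have "norm z * Ls z (g' r) / (norm z)\<^sup>2 \<le> lam" by (simp add: sip_eq)
        then have "Ls z (g' r) / norm z \<le> lam" using z by (simp add: power2_eq_square)
        then show ?thesis using z by (simp add: divide_le_eq mult.commute)
      qed
      have "Ls z (g 1 - g 0) \<le> lam * norm z" by (rule mvt_Ls[OF gd gb])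
      moreover have "g 0 = 0" unfolding g_def using QfS[OF s p] by simp
      ultimately show ?thesis unfolding g_def by simp
    qed
    obtain u' where ucont: "continuous_on {0..} u'" and
      ud: "\<And>t. t \<ge> 0 \<Longrightarrow> (u has_vector_derivative u' t) (at t within {0..}) \<and> u' t = f t (u t)"
      using sol unfolding is_solution_def by blast
    define x where "x t = Q (u t)" for t
    have lemA: "\<exists>d>0. \<forall>h. 0 < h \<longrightarrow> h < d \<longrightarrow> norm (x (s+h)) \<le> norm (x s) + h * (lam * norm (x s) + e)"
      if s: "s \<ge> 0" and e: "e > 0" for s e
    proof -
      have "(u has_derivative (\<lambda>h. h *\<^sub>R u' s)) (at s within {0..})"
        using conjunct1[OF ud[OF s]] unfolding has_vector_derivative_def .
      from bounded_linear.has_derivative[OF Qbl this]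
      have "(x has_derivative (\<lambda>h. h *\<^sub>R Q (u' s))) (at s within {0..})"
        unfolding x_def by (simp add: linear_scale[OF Qlin])
      then obtain d1 where d1: "d1 > 0" and
        dd: "\<And>y. y \<in> {0..} \<Longrightarrow> norm (y - s) < d1 \<Longrightarrow> norm (x y - x s - (y - s) *\<^sub>R Q (u' s)) \<le> (e/2) * norm (y - s)"
        using e unfolding has_derivative_within_alt by (meson half_gt_zero)
      define p where "p = P (u s)"
      define z where "z = x s"
      have p: "p \<in> ?S" unfolding p_def using PS by simp
      have Pz: "P z = 0" unfolding z_def x_def using PQ by simp
      have us: "u s = p + z" unfolding p_def z_def x_def Q_def by simp
      have x': "Q (u' s) = Q (f s (p + z))" using ud[OF s] us by simp
      show ?thesis
      proof (cases "z = 0")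
        case True
        then have x'0: "Q (u' s) = 0" using x' QfS[OF s p] by simp
        show ?thesis
        proof (intro exI[of _ d1] conjI allI impI)
          fix h :: real assume h: "0 < h" "h < d1"
          have "norm (x (s+h) - x s) \<le> (e/2) * h" using dd[of "s+h"] h s x'0 by simp
          then have n: "norm (x (s+h)) \<le> (e/2) * h" using True unfolding z_def by simp
          have ep: "0 < e * h" using e h by simp
          have "(e/2) * h = (e * h)/2" "h * e = e * h" by simp_all
          then have "norm (x (s+h)) \<le> h * e" using n ep by linarith
          then show "norm (x (s + h)) \<le> norm (x s) + h * (lam * norm (x s) + e)"
            using True unfolding z_def by simp
        qed (use d1 in simp)
      next
        case False
        have LB: "Ls z (Q (u' s)) \<le> lam * norm z" using claimB[OF s p Pz False] x' by simp
        obtain h0 where h0: "h0 > 0" "\<And>h. 0 < h \<Longrightarrow> h \<le> h0 \<Longrightarrow> dq z (Q (u' s)) h < Ls z (Q (u' s)) + e/2"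
          using Ls_approx[of "e/2" z "Q (u' s)"] e by auto
        show ?thesis
        proof (intro exI[of _ "min d1 h0"] conjI allI impI)
          fix h :: real assume h: "0 < h" "h < min d1 h0"
          have "norm (x (s+h)) \<le> norm (z + h *\<^sub>R Q (u' s)) + norm (x (s+h) - z - h *\<^sub>R Q (u' s))"
            using norm_triangle_ineq[of "z + h *\<^sub>R Q (u' s)" "x (s+h) - z - h *\<^sub>R Q (u' s)"] by simp
          also have "norm (x (s+h) - z - h *\<^sub>R Q (u' s)) \<le> (e/2) * h"
            using dd[of "s+h"] h s unfolding z_def by simp
          also have "norm (z + h *\<^sub>R Q (u' s)) = norm z + h * dq z (Q (u' s)) h"
            unfolding dq_def using h by simp
          also have "dq z (Q (u' s)) h \<le> lam * norm z + e/2" using h0(2)[of h] h LB by simp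
          finally have "norm (x (s+h)) \<le> norm z + h * (lam * norm z + e/2) + (e/2) * h"
            using h by (smt (verit) mult_left_mono)
          then show "norm (x (s + h)) \<le> norm (x s) + h * (lam * norm (x s) + e)"
            unfolding z_def by (simp add: algebra_simps)
        qed (use d1 h0 in simp)
      qed
    qed
    have ucont0: "continuous_on {0..} u"
      unfolding continuous_on_eq_continuous_within
    proof
      fix t :: real assume "t \<in> {0..}"
      then have "t \<ge> 0" by simp
      from conjunct1[OF ud[OF this]] show "continuous (at t within {0..}) u"
        by (rule has_vector_derivative_continuous)
    qed
    have xcont: "continuous_on {0..} x"
      unfolding x_def by (rule bounded_linear.continuous_on[OF Qbl ucont0])
    have bound: "norm (x T) \<le> norm (x 0) * exp (lam * T)" if T: "T \<ge> 0" for T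
    proof -
      define \<psi> where "\<psi> r = exp (- lam * r) * norm (x r)" for r
      have "\<psi> T \<le> \<psi> 0"
      proof (rule dini[OF T])
        show "continuous_on {0..T} \<psi>" unfolding \<psi>_def
          by (intro continuous_intros continuous_on_subset[OF xcont]) auto
      next
        fix s e :: real assume s: "0 \<le> s" "s < T" and e: "0 < e"
        define E where "E = exp (- lam * (s + 1))"
        have E: "E > 0" unfolding E_def by simp
        obtain d where d: "d > 0" and
          dA: "\<And>h. 0 < h \<Longrightarrow> h < d \<Longrightarrow> norm (x (s+h)) \<le> norm (x s) + h * (lam * norm (x s) + e/E)"
          using lemA[OF s(1), of "e/E"] e E by auto
        show "\<exists>d>0. \<forall>h. 0 < h \<longrightarrow> h < d \<longrightarrow> \<psi> (s+h) \<le> \<psi> s + e*h"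
        proof (intro exI[of _ "min d 1"] conjI allI impI)
          fix h :: real assume h: "0 < h" "h < min d 1"
          define A where "A = exp (- lam * s)"
          define Bh where "Bh = exp (- lam * h)"
          define n0 where "n0 = norm (x s)"
          define n1 where "n1 = norm (x (s+h))"
          have A: "A > 0" and Bh: "Bh > 0" and n0: "n0 \<ge> 0" unfolding A_def Bh_def n0_def by auto
          have n1: "n1 \<le> n0 + h * (lam * n0 + e/E)" using dA[of h] h unfolding n0_def n1_def by simp
          have psi1: "\<psi> (s+h) = A * Bh * n1" unfolding \<psi>_def A_def Bh_def n1_def
            by (simp add: exp_add[symmetric] algebra_simps)
          have psi0: "\<psi> s = A * n0" unfolding \<psi>_def A_def n0_def by simp
          have "1 + lam * h \<le> exp (lam * h)" by (rule exp_ge_add_one_self)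
          moreover have "Bh * exp (lam * h) = 1" unfolding Bh_def by (simp add: exp_add[symmetric])
          ultimately have Bh1: "Bh * (1 + lam * h) \<le> 1" using Bh
            by (metis mult_left_mono less_eq_real_def)
          have ABE: "A * Bh \<le> E" unfolding A_def Bh_def E_def
            using h lam by (simp add: exp_add[symmetric] algebra_simps mult_left_mono_neg)
          have "A * Bh * n1 \<le> A * Bh * (n0 + h * (lam * n0 + e/E))"
            using n1 A Bh by simp
          also have "\<dots> = A * n0 * (Bh * (1 + lam * h)) + h * e * (A * Bh / E)"
            using E by (simp add: field_simps)
          also have "\<dots> \<le> A * n0 * 1 + h * e * 1"
          proof (rule add_mono)
            show "A * n0 * (Bh * (1 + lam * h)) \<le> A * n0 * 1"
              using Bh1 A n0 by (intro mult_left_mono) auto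
            show "h * e * (A * Bh / E) \<le> h * e * 1"
              using ABE E h e by (intro mult_left_mono) auto
          qed
          finally show "\<psi> (s + h) \<le> \<psi> s + e * h" using psi1 psi0 by (simp add: algebra_simps)
        qed (use d in simp)
      qed
      then have le: "exp (- lam * T) * norm (x T) \<le> norm (x 0)" unfolding \<psi>_def by simp
      have ee: "exp (lam * T) * exp (- lam * T) = 1" by (simp add: exp_add[symmetric])
      have "norm (x T) = (exp (lam * T) * exp (- lam * T)) * norm (x T)" unfolding ee by simp
      also have "\<dots> = exp (lam * T) * (exp (- lam * T) * norm (x T))" by (rule mult.assoc)
      also have "\<dots> \<le> exp (lam * T) * norm (x 0)" by (rule mult_left_mono[OF le]) simp
      finally show ?thesis by (simp only: mult.commute)
    qed
    show "\<exists>K. \<forall>t\<ge>0. infdist (u t) (fixed_space G) \<le> K * exp (lam * t)"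
    proof (intro exI[of _ "norm (x 0)"] allI impI)
      fix t :: real assume t: "t \<ge> 0"
      have "infdist (u t) ?S \<le> dist (u t) (P (u t))" using PS by (rule infdist_le)
      also have "\<dots> = norm (x t)" unfolding x_def Q_def by (simp add: dist_norm)
      also have "\<dots> \<le> norm (x 0) * exp (lam * t)" using bound[OF t] .
      finally show "infdist (u t) ?S \<le> norm (x 0) * exp (lam * t)" .
    qed
  qed
  show ?thesis using P(1) PP rng part4 part5 by blast
qed

end
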